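(* Let $\Omega\subset\mathbb R^d$, $d\in\{2,3\}$, be a bounded domain of class $C^3$, let $m,f,F,\nu,\rho$ satisfy the assumptions in the context, and let $\mathbf u_0\in\mathbf L^2_\sigma(\Omega)$ and $\varphi_0\in\mathcal H_k$ with $\overline{\varphi_0}\in(-1,1)$. Then any global weak solution $(\mathbf u,\varphi,\mu)$ of the Abels–Garcke–Grün system departing from $(\mathbf u_0,\varphi_0)$ satisfies $\lim_{t\to\infty}\|\mathbf u(t)\|_{L^2(\Omega)}=0$.
   Context: Assumptions: $m\in C([-1,1])$, $0<m_*\le m\le m^*$ on $[-1,1]$. $f(s)=F(s)-\frac{\theta_0}{2}s^2$ on $[-1,1]$, $\theta_0>0$, $F\in C([-1,1])\cap C^2(-1,1)$, $F'(r)\to\mp\infty$ as $r\to\mp1$, $F''\ge\theta\in(0,\theta_0)$, $F(0)=F'(0)=0$, $f=F=+\infty$ outside $[-1,1]$. $\nu\in W^{1,\infty}(\mathbb R)$ with $0<\nu_*\le\nu\le\nu^*$. $\rho(s)=\frac{1+s}{2}\rho_1+\frac{1-s}{2}\rho_2$ with $\rho_1,\rho_2>0$; $\rho_*=\min\{\rho_1,\rho_2\}$, $\rho^*=\max\{\rho_1,\rho_2\}$. $\mathbf L^2_\sigma(\Omega)$ is the $L^2$-closure of smooth compactly supported divergence-free fields, $\mathbf H^1_\sigma=\mathbf L^2_\sigma\cap\mathbf H^1$; $D\mathbf u$ is the symmetric gradient. $E(v)=\frac12\int_\Omega|\nabla v|^2+\int_\Omega f(v)$; $E_{tot}(\mathbf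 u,\varphi)=\frac12\int_\Omega\rho(\varphi)|\mathbf u|^2+E(\varphi)$. $\mathcal H_k=\{\varphi\in H^1(\Omega):\|\varphi\|_{L^\infty}\le1,\ |\overline\varphi|=k\}$, $k\in[0,1)$. A global weak solution departing from $(\mathbf u_0,\varphi_0)$ is $(\mathbf u,\varphi,\mu)$ with $\mathbf u\in BC_w([0,\infty);\mathbf L^2_\sigma)\cap L^2(0,\infty;\mathbf H^1_\sigma)$, $\varphi\in BC_w([0,\infty);H^1)\cap L^2_{uloc}([0,\infty);H^2)$, $|\varphi|<1$ a.e., $\partial_t\varphi\in L^2(0,\infty;H^1_{(0)}(\Omega)')$, $\mu\in L^2_{uloc}([0,\infty);H^1)$, $\mathbf u(0)=\mathbf u_0$, $\varphi(0)=\varphi_0$, such that for every $T>0$ and every $\mathbf w\in C_0^\infty(\Omega\times(0,T))^d$ with $\operatorname{div}\mathbf w=0$: $\int_0^T\big(-(\rho(\varphi)\mathbf u,\partial_t\mathbf w)-(\rho(\varphi)\mathbf u\otimes\mathbf u,D\mathbf w)+(\nu(\varphi)D\mathbf u,D\mathbf w)-(\mathbf u,(\mathbf J\cdot\nabla)\mathbf w)\big)d\tau=-\int_0^T(\varphi\nabla\mu,\mathbf w)d\tau$, where $\mathbf J=-\frac{\rho_1-\rho_2}{2}m(\varphi)\nabla\mu$; $\langle\partial_t\varphi,v\rangle-(\varphi\mathbf u,\nabla v)+(m(\varphi)\nabla\mu,\nabla v)=0$ for all $v\in H^1(\Omega)$ and a.a. $t$; $\mu=-\Delta\varphi+f'(\varphi)$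 a.e.; $\partial_{\mathbf n}\varphi=0$ on $\partial\Omega$; and for all $t\ge0$ and a.a. $s\in[0,t]$ (including $s=0$): $\frac12\int_\Omega\rho(\varphi(t))|\mathbf u(t)|^2+\int_s^t\int_\Omega\nu(\varphi)|D\mathbf u|^2\le\frac12\int_\Omega\rho(\varphi(s))|\mathbf u(s)|^2-\int_s^t\int_\Omega\mathbf u\cdot\nabla\mu\,\varphi$ and $E(\varphi(t))+\int_s^t\int_\Omega m(\varphi)|\nabla\mu|^2\le E(\varphi(s))+\int_s^t\int_\Omega\mathbf u\cdot\nabla\mu\,\varphi$ (whose sum gives $E_{tot}(\mathbf u(t),\varphi(t))+\int_s^t\int_\Omega(\nu(\varphi)|D\mathbf u|^2+m(\varphi)|\nabla\mu|^2)\le E_{tot}(\mathbf u(s),\varphi(s))$). *)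

theory Defs
  imports "HOL-Analysis.Analysis"
begin

fun Ck :: "nat \<Rightarrow> ('a::euclidean_space \<Rightarrow> 'b::real_normed_vector) \<Rightarrow> bool" where
  "Ck 0 f = continuous_on UNIV f"
| "Ck (Suc k) f = ((\<forall>x. f differentiable (at x)) \<and>
      (\<forall>b\<in>Basis. Ck k (\<lambda>x. frechet_derivative f (at x) b)))"

definition smooth :: "('a::euclidean_space \<Rightarrow> 'b::real_normed_vector) \<Rightarrow> bool" where
  "smooth f \<longleftrightarrow> (\<forall>k. Ck k f)"

definition pd :: "'a::euclidean_space \<Rightarrow> ('a \<Rightarrow> 'b::real_normed_vector) \<Rightarrow> 'a \<Rightarrow> 'b" where
  "pd b f x = frechet_derivative f (at x) b"

definition csupp_in :: "'a::euclidean_space set \<Rightarrow> ('a \<Rightarrow> 'b::real_normed_vector) \<Rightarrow> bool" where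
  "csupp_in S f \<longleftrightarrow> compact (closure {x. f x \<noteq> 0}) \<and> closure {x. f x \<noteq> 0} \<subseteq> S"

definition test_fun :: "'a::euclidean_space set \<Rightarrow> ('a \<Rightarrow> 'b::real_normed_vector) \<Rightarrow> bool" where
  "test_fun S f \<longleftrightarrow> smooth f \<and> csupp_in S f"

definition divg :: "(real^'n \<Rightarrow> real^'n) \<Rightarrow> real^'n \<Rightarrow> real" where
  "divg w x = (\<Sum>i\<in>UNIV. pd (axis i 1) (\<lambda>y. w y $ i) x)"

definition C3_domain :: "(real^'n) set \<Rightarrow> bool" where
  "C3_domain \<Omega> \<longleftrightarrow> open \<Omega> \<and> connected \<Omega> \<and> bounded \<Omega> \<and> \<Omega> \<noteq> {} \<and>
     (\<forall>x0\<in>frontier \<Omega>. \<exists>r>0. \<exists>\<psi>::real^'n \<Rightarrow> real.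
        Ck 3 \<psi> \<and> frechet_derivative \<psi> (at x0) \<noteq> (\<lambda>_. 0) \<and>
        \<Omega> \<inter> ball x0 r = {x\<in>ball x0 r. \<psi> x < 0})"

definition L2 :: "(real^'n) set \<Rightarrow> (real^'n \<Rightarrow> 'b::euclidean_space) \<Rightarrow> bool" where
  "L2 \<Omega> f \<longleftrightarrow> f \<in> borel_measurable (lebesgue_on \<Omega>) \<and>
      integrable (lebesgue_on \<Omega>) (\<lambda>x. (norm (f x))\<^sup>2)"

definition weak_pd :: "(real^'n) set \<Rightarrow> 'n \<Rightarrow> (real^'n \<Rightarrow> real) \<Rightarrow> (real^'n \<Rightarrow> real) \<Rightarrow> bool" where
  "weak_pd \<Omega> i f g \<longleftrightarrow> (\<forall>\<psi>::real^'n \<Rightarrow> real. test_fun \<Omega> \<psi> \<longrightarrow>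
      (LINT x|lebesgue_on \<Omega>. f x * pd (axis i 1) \<psi> x) = - (LINT x|lebesgue_on \<Omega>. g x * \<psi> x))"

definition weak_grad :: "(real^'n) set \<Rightarrow> (real^'n \<Rightarrow> real) \<Rightarrow> (real^'n \<Rightarrow> real^'n) \<Rightarrow> bool" where
  "weak_grad \<Omega> f G \<longleftrightarrow> L2 \<Omega> f \<and> L2 \<Omega> G \<and> (\<forall>i. weak_pd \<Omega> i f (\<lambda>x. G x $ i))"

definition H1 :: "(real^'n) set \<Rightarrow> (real^'n \<Rightarrow> real) \<Rightarrow> bool" where
  "H1 \<Omega> f \<longleftrightarrow> (\<exists>G. weak_grad \<Omega> f G)"

text \<open>vector field u in H^1 with weak Jacobian J, J x $ i $ j = partial_j u_i\<close>
definition weak_jac :: "(real^'n) set \<Rightarrow> (real^'n \<Rightarrow> real^'n) \<Rightarrow> (real^'n \<Rightarrow> real^'n^'n) \<Rightarrow> bool" where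
  "weak_jac \<Omega> u J \<longleftrightarrow> (\<forall>i. weak_grad \<Omega> (\<lambda>x. u x $ i) (\<lambda>x. J x $ i))"

definition L2sigma :: "(real^'n) set \<Rightarrow> (real^'n \<Rightarrow> real^'n) \<Rightarrow> bool" where
  "L2sigma \<Omega> u \<longleftrightarrow> L2 \<Omega> u \<and> (\<forall>\<epsilon>>0. \<exists>w::real^'n \<Rightarrow> real^'n.
      test_fun \<Omega> w \<and> (\<forall>x. divg w x = 0) \<and>
      (LINT x|lebesgue_on \<Omega>. (norm (u x - w x))\<^sup>2) < \<epsilon>)"

definition mean :: "(real^'n) set \<Rightarrow> (real^'n \<Rightarrow> real) \<Rightarrow> real" where
  "mean \<Omega> v = (LINT x|lebesgue_on \<Omega>. v x) / measure lebesgue \<Omega>"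

definition Hk :: "(real^'n) set \<Rightarrow> real \<Rightarrow> (real^'n \<Rightarrow> real) set" where
  "Hk \<Omega> k = {v. H1 \<Omega> v \<and> (AE x in lebesgue_on \<Omega>. \<bar>v x\<bar> \<le> 1) \<and> \<bar>mean \<Omega> v\<bar> = k}"

definition symgrad :: "real^'n^'n \<Rightarrow> real^'n^'n" where
  "symgrad A = (1/2) *\<^sub>R (A + transpose A)"

definition frob :: "real^'n^'n \<Rightarrow> real^'n^'n \<Rightarrow> real" where
  "frob A B = (\<Sum>i\<in>UNIV. \<Sum>j\<in>UNIV. A $ i $ j * B $ i $ j)"

definition outer :: "real^'n \<Rightarrow> real^'n \<Rightarrow> real^'n^'n" where
  "outer a b = (\<chi> i j. a $ i * b $ j)"

definition lap :: "real^'n^'n \<Rightarrow> real" where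
  "lap A = (\<Sum>i\<in>UNIV. A $ i $ i)"

text \<open>spatial Jacobian of a space-time field W(t,x): entry i j = partial_{x_j} W_i\<close>
definition Wgrad :: "(real \<times> (real^'n) \<Rightarrow> real^'n) \<Rightarrow> real \<Rightarrow> real^'n \<Rightarrow> real^'n^'n" where
  "Wgrad W t x = (\<chi> i j. pd (0, axis j 1) (\<lambda>z. W z $ i) (t, x))"

definition rho :: "real \<Rightarrow> real \<Rightarrow> real \<Rightarrow> real" where
  "rho \<rho>1 \<rho>2 s = (1 + s) / 2 * \<rho>1 + (1 - s) / 2 * \<rho>2"

definition ffun :: "(real \<Rightarrow> real) \<Rightarrow> real \<Rightarrow> real \<Rightarrow> real" where
  "ffun F \<theta>0 s = F s - \<theta>0 / 2 * s\<^sup>2"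

text \<open>Free energy E(v), with gradient G of v; equal to +infinity unless |v| \<le> 1 a.e.
  (since f = +infinity outside [-1,1]).\<close>
definition Eng :: "(real^'n) set \<Rightarrow> (real \<Rightarrow> real) \<Rightarrow> real \<Rightarrow> (real^'n \<Rightarrow> real) \<Rightarrow> (real^'n \<Rightarrow> real^'n) \<Rightarrow> ereal" where
  "Eng \<Omega> F \<theta>0 v G = (if AE x in lebesgue_on \<Omega>. \<bar>v x\<bar> \<le> 1
     then ereal ((1/2) * (LINT x|lebesgue_on \<Omega>. (norm (G x))\<^sup>2) + (LINT x|lebesgue_on \<Omega>. ffun F \<theta>0 (v x)))
     else \<infinity>)"

definition ST :: "(real^'n) set \<Rightarrow> real set \<Rightarrow> (real \<times> (real^'n)) measure" where
  "ST \<Omega> A = lebesgue_on A \<Otimes>\<^sub>M lebesgue_on \<Omega>"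

definition stint :: "(real^'n) set \<Rightarrow> real \<Rightarrow> real \<Rightarrow> (real \<Rightarrow> real^'n \<Rightarrow> real) \<Rightarrow> real" where
  "stint \<Omega> a b h = (LINT \<tau>|lebesgue_on {a..b}. (LINT x|lebesgue_on \<Omega>. h \<tau> x))"

definition global_weak_solution ::
  "(real^'n) set \<Rightarrow> (real \<Rightarrow> real) \<Rightarrow> (real \<Rightarrow> real) \<Rightarrow> real \<Rightarrow> (real \<Rightarrow> real) \<Rightarrow> real \<Rightarrow> real \<Rightarrow>
   (real^'n \<Rightarrow> real^'n) \<Rightarrow> (real^'n \<Rightarrow> real) \<Rightarrow>
   (real \<Rightarrow> real^'n \<Rightarrow> real^'n) \<Rightarrow> (real \<Rightarrow> real^'n \<Rightarrow> real) \<Rightarrow> (real \<Rightarrow> real^'n \<Rightarrow> real) \<Rightarrow> bool" where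
  "global_weak_solution \<Omega> m F \<theta>0 \<nu> \<rho>1 \<rho>2 u0 phi0 u phi mu \<longleftrightarrow>
   (\<exists>(Gu :: real \<Rightarrow> real^'n \<Rightarrow> real^'n^'n) (Gphi :: real \<Rightarrow> real^'n \<Rightarrow> real^'n)
      (Hphi :: real \<Rightarrow> real^'n \<Rightarrow> real^'n^'n) (Gmu :: real \<Rightarrow> real^'n \<Rightarrow> real^'n)
      (D :: real \<Rightarrow> (real^'n \<Rightarrow> real) \<Rightarrow> real) (g :: real \<Rightarrow> real).
     \<comment> \<open>u in BC_w([0,oo); L^2_sigma)\<close>
     (\<forall>t\<ge>0. L2sigma \<Omega> (u t)) \<and>
     (\<exists>C. \<forall>t\<ge>0. (LINT x|lebesgue_on \<Omega>. (norm (u t x))\<^sup>2) \<le> C) \<and>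
     (\<forall>w::real^'n \<Rightarrow> real^'n. L2 \<Omega> w \<longrightarrow>
        continuous_on {0..} (\<lambda>t. LINT x|lebesgue_on \<Omega>. u t x \<bullet> w x)) \<and>
     \<comment> \<open>u in L^2(0,oo; H^1_sigma)\<close>
     (\<lambda>(t,x). u t x) \<in> borel_measurable (ST \<Omega> {0..}) \<and>
     (\<lambda>(t,x). Gu t x) \<in> borel_measurable (ST \<Omega> {0..}) \<and>
     (AE t in lebesgue_on {0..}. weak_jac \<Omega> (u t) (Gu t)) \<and>
     integrable (ST \<Omega> {0..}) (\<lambda>(t,x). (norm (u t x))\<^sup>2 + (norm (Gu t x))\<^sup>2) \<and>
     \<comment> \<open>phi in BC_w([0,oo); H^1)\<close>
     (\<forall>t\<ge>0. weak_grad \<Omega> (phi t) (Gphi t)) \<and>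
     (\<exists>C. \<forall>t\<ge>0. (LINT x|lebesgue_on \<Omega>. (phi t x)\<^sup>2 + (norm (Gphi t x))\<^sup>2) \<le> C) \<and>
     (\<forall>v Gv. weak_grad \<Omega> v Gv \<longrightarrow>
        continuous_on {0..} (\<lambda>t. LINT x|lebesgue_on \<Omega>. phi t x * v x + Gphi t x \<bullet> Gv x)) \<and>
     \<comment> \<open>phi in L^2_uloc([0,oo); H^2)\<close>
     (\<lambda>(t,x). phi t x) \<in> borel_measurable (ST \<Omega> {0..}) \<and>
     (\<lambda>(t,x). Gphi t x) \<in> borel_measurable (ST \<Omega> {0..}) \<and>
     (\<lambda>(t,x). Hphi t x) \<in> borel_measurable (ST \<Omega> {0..}) \<and>
     (AE t in lebesgue_on {0..}. weak_jac \<Omega> (Gphi t) (Hphi t)) \<and>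
     (\<exists>C. \<forall>\<tau>\<ge>0. integrable (ST \<Omega> {\<tau>..\<tau>+1}) (\<lambda>(t,x). (norm (Hphi t x))\<^sup>2) \<and>
         integral\<^sup>L (ST \<Omega> {\<tau>..\<tau>+1}) (\<lambda>(t,x). (norm (Hphi t x))\<^sup>2) \<le> C) \<and>
     \<comment> \<open>|phi| < 1 a.e.\<close>
     (AE z in ST \<Omega> {0..}. \<bar>phi (fst z) (snd z)\<bar> < 1) \<and>
     \<comment> \<open>d/dt phi = D in L^2(0,oo; H^1_(0)(Omega)')\<close>
     (\<forall>v. H1 \<Omega> v \<longrightarrow> (\<lambda>t. D t v) \<in> borel_measurable (lebesgue_on {0..})) \<and>
     g \<in> borel_measurable (lebesgue_on {0..}) \<and>
     integrable (lebesgue_on {0..}) (\<lambda>t. (g t)\<^sup>2) \<and>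
     (AE t in lebesgue_on {0..}.
        (\<forall>v w a b. H1 \<Omega> v \<longrightarrow> H1 \<Omega> w \<longrightarrow> D t (\<lambda>x. a * v x + b * w x) = a * D t v + b * D t w) \<and>
        (\<forall>v Gv. weak_grad \<Omega> v Gv \<longrightarrow>
           \<bar>D t v\<bar> \<le> g t * sqrt (LINT x|lebesgue_on \<Omega>. (norm (Gv x))\<^sup>2))) \<and>
     (\<forall>v (\<zeta>::real \<Rightarrow> real). H1 \<Omega> v \<longrightarrow> test_fun {0<..} \<zeta> \<longrightarrow>
        - (LINT t|lebesgue_on {0..}. (LINT x|lebesgue_on \<Omega>. phi t x * v x) * deriv \<zeta> t)
        = (LINT t|lebesgue_on {0..}. D t v * \<zeta> t)) \<and>
     \<comment> \<open>mu in L^2_uloc([0,oo); H^1)\<close>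
     (\<lambda>(t,x). mu t x) \<in> borel_measurable (ST \<Omega> {0..}) \<and>
     (\<lambda>(t,x). Gmu t x) \<in> borel_measurable (ST \<Omega> {0..}) \<and>
     (AE t in lebesgue_on {0..}. weak_grad \<Omega> (mu t) (Gmu t)) \<and>
     (\<exists>C. \<forall>\<tau>\<ge>0. integrable (ST \<Omega> {\<tau>..\<tau>+1}) (\<lambda>(t,x). (mu t x)\<^sup>2 + (norm (Gmu t x))\<^sup>2) \<and>
         integral\<^sup>L (ST \<Omega> {\<tau>..\<tau>+1}) (\<lambda>(t,x). (mu t x)\<^sup>2 + (norm (Gmu t x))\<^sup>2) \<le> C) \<and>
     \<comment> \<open>initial data\<close>
     (AE x in lebesgue_on \<Omega>. u 0 x = u0 x) \<and>
     (AE x in lebesgue_on \<Omega>. phi 0 x = phi0 x) \<and>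
     \<comment> \<open>momentum equation, weak form\<close>
     (\<forall>T>0. \<forall>W::real \<times> (real^'n) \<Rightarrow> real^'n.
        test_fun ({0<..<T} \<times> \<Omega>) W \<and> (\<forall>t x. divg (\<lambda>y. W (t, y)) x = 0) \<longrightarrow>
        stint \<Omega> 0 T (\<lambda>\<tau> x.
            - (rho \<rho>1 \<rho>2 (phi \<tau> x) * (u \<tau> x \<bullet> pd (1, 0) W (\<tau>, x)))
            - rho \<rho>1 \<rho>2 (phi \<tau> x) * frob (outer (u \<tau> x) (u \<tau> x)) (symgrad (Wgrad W \<tau> x))
            + \<nu> (phi \<tau> x) * frob (symgrad (Gu \<tau> x)) (symgrad (Wgrad W \<tau> x))
            - (\<Sum>i\<in>UNIV. u \<tau> x $ i *
                 (\<Sum>j\<in>UNIV. (- (\<rho>1 - \<rho>2) / 2 * m (phi \<tau> x) * Gmu \<tau> x $ j) * Wgrad W \<tau> x $ i $ j)))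
        = - stint \<Omega> 0 T (\<lambda>\<tau> x. phi \<tau> x * (Gmu \<tau> x \<bullet> W (\<tau>, x)))) \<and>
     \<comment> \<open>Cahn--Hilliard equation, weak form\<close>
     (AE t in lebesgue_on {0..}. \<forall>v Gv. weak_grad \<Omega> v Gv \<longrightarrow>
        D t v - (LINT x|lebesgue_on \<Omega>. phi t x * (u t x \<bullet> Gv x))
          + (LINT x|lebesgue_on \<Omega>. m (phi t x) * (Gmu t x \<bullet> Gv x)) = 0) \<and>
     \<comment> \<open>mu = - Laplace phi + f'(phi) a.e.\<close>
     (AE t in lebesgue_on {0..}. AE x in lebesgue_on \<Omega>.
        mu t x = - lap (Hphi t x) + deriv F (phi t x) - \<theta>0 * phi t x) \<and>
     \<comment> \<open>homogeneous Neumann condition for the H^2 function phi(t) (Green's formula)\<close>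
     (AE t in lebesgue_on {0..}. \<forall>v Gv. weak_grad \<Omega> v Gv \<longrightarrow>
        (LINT x|lebesgue_on \<Omega>. lap (Hphi t x) * v x) = - (LINT x|lebesgue_on \<Omega>. Gphi t x \<bullet> Gv x)) \<and>
     \<comment> \<open>energy inequalities, for all t and s = 0 and a.a. s in [0,t]\<close>
     (\<forall>t\<ge>0. let
        KE = (\<lambda>s. (1/2) * (LINT x|lebesgue_on \<Omega>. rho \<rho>1 \<rho>2 (phi t x) * (norm (u t x))\<^sup>2)
                 + stint \<Omega> s t (\<lambda>\<tau> x. \<nu> (phi \<tau> x) * frob (symgrad (Gu \<tau> x)) (symgrad (Gu \<tau> x)))
               \<le> (1/2) * (LINT x|lebesgue_on \<Omega>. rho \<rho>1 \<rho>2 (phi s x) * (norm (u s x))\<^sup>2)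
                 - stint \<Omega> s t (\<lambda>\<tau> x. (u \<tau> x \<bullet> Gmu \<tau> x) * phi \<tau> x));
        EE = (\<lambda>s. Eng \<Omega> F \<theta>0 (phi t) (Gphi t)
                 + ereal (stint \<Omega> s t (\<lambda>\<tau> x. m (phi \<tau> x) * (norm (Gmu \<tau> x))\<^sup>2))
               \<le> Eng \<Omega> F \<theta>0 (phi s) (Gphi s)
                 + ereal (stint \<Omega> s t (\<lambda>\<tau> x. (u \<tau> x \<bullet> Gmu \<tau> x) * phi \<tau> x)))
      in (KE 0 \<and> EE 0) \<and> (AE s in lebesgue_on {0..t}. KE s \<and> EE s)))"

end

theory Submission
  imports Defs
begin

lemma tail0:
  fixes g :: "'a \<Rightarrow> ennreal" and tm :: "'a \<Rightarrow> real"
  assumes g[measurable]: "g \<in> borel_measurable M" and tm[measurable]: "tm \<in> borel_measurable M"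
    and fin: "integral\<^sup>N M g < \<infinity>" and eta: "\<eta> > 0"
  shows "\<exists>S. \<forall>s\<ge>S. (\<integral>\<^sup>+ z. g z * indicator {s..} (tm z) \<partial>M) < \<eta>"
proof -
  define f where "f n z = g z * indicator {real n..} (tm z)" for n :: nat and z
  have dec: "decseq f"
  proof (rule decseq_SucI, rule le_funI)
    fix n z show "f (Suc n) z \<le> f n z"
      unfolding f_def by (auto simp: indicator_def)
  qed
  have fm: "f i \<in> borel_measurable M" for i unfolding f_def by measurable
  have ff: "integral\<^sup>N M (f i) < \<infinity>" for i
  proof -
    have "integral\<^sup>N M (f i) \<le> integral\<^sup>N M g"
      unfolding f_def by (intro nn_integral_mono) (auto simp: indicator_def)
    then show ?thesis using fin by simp
  qed
  have inf0: "(INF i. f i z) = 0" for z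
  proof -
    have "(INF i. f i z) \<le> f (nat (ceiling (tm z)) + 1) z" by (rule INF_lower) simp
    also have "\<dots> = 0" unfolding f_def
      by (auto simp: indicator_def) linarith
    finally show ?thesis by simp
  qed
  have "(INF i. integral\<^sup>N M (f i)) = 0"
    using nn_integral_monotone_convergence_INF_decseq[OF dec fm ff] inf0 by simp
  then have "(INF i. integral\<^sup>N M (f i)) < \<eta>" using eta by simp
  then obtain n where n: "integral\<^sup>N M (f n) < \<eta>" by (auto simp: INF_less_iff)
  show ?thesis
  proof (intro exI allI impI)
    fix s assume "real n \<le> s"
    then have "(\<integral>\<^sup>+ z. g z * indicator {s..} (tm z) \<partial>M) \<le> integral\<^sup>N M (f n)"
      unfolding f_def by (intro nn_integral_mono) (auto simp: indicator_def)
    then show "(\<integral>\<^sup>+ z. g z * indicator {s..} (tm z) \<partial>M) < \<eta>" using n by simp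
  qed
qed

lemma norm_int_le_nn:
  fixes f :: "'a \<Rightarrow> real"
  shows "ennreal (norm (integral\<^sup>L M f)) \<le> (\<integral>\<^sup>+x. norm (f x) \<partial>M)"
  using integral_norm_bound_ennreal[of M f]
  by (cases "integrable M f") (auto simp: not_integrable_integral_eq)

lemma restrict_L0:
  fixes F :: "real \<Rightarrow> ennreal"
  assumes "S \<in> sets lebesgue" "S \<subseteq> T" "T \<in> sets lebesgue"
  shows "integral\<^sup>N (lebesgue_on S) F = (\<integral>\<^sup>+ \<tau>. F \<tau> * indicator S \<tau> \<partial>lebesgue_on T)"
proof -
  have "integral\<^sup>N (lebesgue_on S) F = (\<integral>\<^sup>+ \<tau>. F \<tau> * indicator S \<tau> \<partial>lebesgue)"
    using assms by (intro nn_integral_restrict_space) auto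
  also have "\<dots> = (\<integral>\<^sup>+ \<tau>. F \<tau> * indicator S \<tau> * indicator T \<tau> \<partial>lebesgue)"
    using assms by (intro nn_integral_cong) (auto simp: indicator_def)
  also have "\<dots> = (\<integral>\<^sup>+ \<tau>. F \<tau> * indicator S \<tau> \<partial>lebesgue_on T)"
    using assms by (intro nn_integral_restrict_space[symmetric]) auto
  finally show ?thesis .
qed

lemma tonelli_ind:
  fixes F :: "real \<times> 'b \<Rightarrow> ennreal"
  assumes N: "sigma_finite_measure N" and F[measurable]: "F \<in> borel_measurable (lebesgue_on T \<Otimes>\<^sub>M N)"
    and S: "S \<in> sets lebesgue"
  shows "(\<integral>\<^sup>+ z. F z * indicator S (fst z) \<partial>(lebesgue_on T \<Otimes>\<^sub>M N))
       = (\<integral>\<^sup>+ \<tau>. (\<integral>\<^sup>+ x. F (\<tau>,x) \<partial>N) * indicator S \<tau> \<partial>lebesgue_on T)"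
proof -
  have "indicator S \<in> borel_measurable lebesgue"
    using S by (rule borel_measurable_indicator)
  then have [measurable]: "indicator S \<in> borel_measurable (lebesgue_on T)"
    by (rule measurable_restrict_space1)
  have m: "(\<lambda>z. F z * indicator S (fst z)) \<in> borel_measurable (lebesgue_on T \<Otimes>\<^sub>M N)"
    by measurable
  have "(\<integral>\<^sup>+ z. F z * indicator S (fst z) \<partial>(lebesgue_on T \<Otimes>\<^sub>M N))
      = (\<integral>\<^sup>+ \<tau>. (\<integral>\<^sup>+ x. F (\<tau>,x) * indicator S \<tau> \<partial>N) \<partial>lebesgue_on T)"
    using sigma_finite_measure.nn_integral_fst[OF N m] by simp
  also have "\<dots> = (\<integral>\<^sup>+ \<tau>. (\<integral>\<^sup>+ x. F (\<tau>,x) \<partial>N) * indicator S \<tau> \<partial>lebesgue_on T)"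
    by (intro nn_integral_cong) (auto simp: indicator_def)
  finally show ?thesis .
qed

lemma amgm:
  fixes x y a :: real
  assumes "0 < a"
  shows "x * y \<le> a / 2 * x\<^sup>2 + 1 / (2 * a) * y\<^sup>2"
proof -
  have "0 \<le> (a * x - y)\<^sup>2" by simp
  then have "2 * a * (x * y) \<le> a\<^sup>2 * x\<^sup>2 + y\<^sup>2" by (simp add: power2_eq_square algebra_simps)
  then have "x * y \<le> (a\<^sup>2 * x\<^sup>2 + y\<^sup>2) / (2 * a)" using assms by (simp add: field_simps)
  also have "\<dots> = a / 2 * x\<^sup>2 + 1 / (2 * a) * y\<^sup>2" using assms by (simp add: field_simps power2_eq_square)
  finally show ?thesis .
qed

lemma rho_bounds:
  assumes "\<bar>s\<bar> \<le> 1" "0 < r1" "0 < r2"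
  shows "min r1 r2 \<le> rho r1 r2 s" "rho r1 r2 s \<le> max r1 r2"
proof -
  define w where "w = (1 + s) / 2"
  have w: "0 \<le> w" "w \<le> 1" using assms by (auto simp: w_def)
  have r: "rho r1 r2 s = w * r1 + (1 - w) * r2" by (simp add: rho_def w_def field_simps)
  have "w * min r1 r2 \<le> w * r1" "(1 - w) * min r1 r2 \<le> (1 - w) * r2"
    using w by (auto intro!: mult_left_mono)
  then show "min r1 r2 \<le> rho r1 r2 s" unfolding r by (simp add: algebra_simps)
  have "w * r1 \<le> w * max r1 r2" "(1 - w) * r2 \<le> (1 - w) * max r1 r2"
    using w by (auto intro!: mult_left_mono)
  then show "rho r1 r2 s \<le> max r1 r2" unfolding r by (simp add: algebra_simps)
qed


theorem lemma3p7:
  fixes \<Omega> :: "(real^'n) set"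
    and m F \<nu> :: "real \<Rightarrow> real"
    and \<theta>0 \<theta> \<rho>1 \<rho>2 m_lo m_hi \<nu>_lo \<nu>_hi k :: real
    and u0 :: "real^'n \<Rightarrow> real^'n" and phi0 :: "real^'n \<Rightarrow> real"
    and u :: "real \<Rightarrow> real^'n \<Rightarrow> real^'n" and phi mu :: "real \<Rightarrow> real^'n \<Rightarrow> real"
  assumes dim: "CARD('n) = 2 \<or> CARD('n) = 3"
    and dom: "C3_domain \<Omega>"
    and m_cont: "continuous_on {-1..1} m"
    and m_bds: "0 < m_lo" "\<forall>s\<in>{-1..1}. m_lo \<le> m s \<and> m s \<le> m_hi"
    and theta0: "0 < \<theta>0"
    and F_cont: "continuous_on {-1..1} F"
    and F_C2: "\<forall>s\<in>{-1<..<1}. (F has_real_derivative deriv F s) (at s) \<and>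
                   (deriv F has_real_derivative deriv (deriv F) s) (at s)"
              "continuous_on {-1<..<1} (deriv (deriv F))"
    and F_sing: "filterlim (deriv F) at_bot (at_right (-1))" "filterlim (deriv F) at_top (at_left 1)"
    and F_convex: "0 < \<theta>" "\<theta> < \<theta>0" "\<forall>s\<in>{-1<..<1}. deriv (deriv F) s \<ge> \<theta>"
    and F_0: "F 0 = 0" "deriv F 0 = 0"
    and nu_W1inf: "\<exists>L. L-lipschitz_on UNIV \<nu>"
    and nu_bds: "0 < \<nu>_lo" "\<forall>s. \<nu>_lo \<le> \<nu> s \<and> \<nu> s \<le> \<nu>_hi"
    and rho_pos: "0 < \<rho>1" "0 < \<rho>2"
    and u0: "L2sigma \<Omega> u0"
    and phi0: "0 \<le> k" "k < 1" "phi0 \<in> Hk \<Omega> k" "mean \<Omega> phi0 \<in> {-1<..<1}"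
    and sol: "global_weak_solution \<Omega> m F \<theta>0 \<nu> \<rho>1 \<rho>2 u0 phi0 u phi mu"
  shows "((\<lambda>t. sqrt (LINT x|lebesgue_on \<Omega>. (norm (u t x))\<^sup>2)) \<longlongrightarrow> 0) at_top"

proof -
  obtain Gu Gphi Hphi Gmu D g where H: "\<comment> \<open>u in BC_w([0,oo); L^2_sigma)\<close>
     (\<forall>t\<ge>0. L2sigma \<Omega> (u t)) \<and>
     (\<exists>C. \<forall>t\<ge>0. (LINT x|lebesgue_on \<Omega>. (norm (u t x))\<^sup>2) \<le> C) \<and>
     (\<forall>w::real^'n \<Rightarrow> real^'n. L2 \<Omega> w \<longrightarrow>
        continuous_on {0..} (\<lambda>t. LINT x|lebesgue_on \<Omega>. u t x \<bullet> w x)) \<and>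
     \<comment> \<open>u in L^2(0,oo; H^1_sigma)\<close>
     (\<lambda>(t,x). u t x) \<in> borel_measurable (ST \<Omega> {0..}) \<and>
     (\<lambda>(t,x). Gu t x) \<in> borel_measurable (ST \<Omega> {0..}) \<and>
     (AE t in lebesgue_on {0..}. weak_jac \<Omega> (u t) (Gu t)) \<and>
     integrable (ST \<Omega> {0..}) (\<lambda>(t,x). (norm (u t x))\<^sup>2 + (norm (Gu t x))\<^sup>2) \<and>
     \<comment> \<open>phi in BC_w([0,oo); H^1)\<close>
     (\<forall>t\<ge>0. weak_grad \<Omega> (phi t) (Gphi t)) \<and>
     (\<exists>C. \<forall>t\<ge>0. (LINT x|lebesgue_on \<Omega>. (phi t x)\<^sup>2 + (norm (Gphi t x))\<^sup>2) \<le> C) \<and>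
     (\<forall>v Gv. weak_grad \<Omega> v Gv \<longrightarrow>
        continuous_on {0..} (\<lambda>t. LINT x|lebesgue_on \<Omega>. phi t x * v x + Gphi t x \<bullet> Gv x)) \<and>
     \<comment> \<open>phi in L^2_uloc([0,oo); H^2)\<close>
     (\<lambda>(t,x). phi t x) \<in> borel_measurable (ST \<Omega> {0..}) \<and>
     (\<lambda>(t,x). Gphi t x) \<in> borel_measurable (ST \<Omega> {0..}) \<and>
     (\<lambda>(t,x). Hphi t x) \<in> borel_measurable (ST \<Omega> {0..}) \<and>
     (AE t in lebesgue_on {0..}. weak_jac \<Omega> (Gphi t) (Hphi t)) \<and>
     (\<exists>C. \<forall>\<tau>\<ge>0. integrable (ST \<Omega> {\<tau>..\<tau>+1}) (\<lambda>(t,x). (norm (Hphi t x))\<^sup>2) \<and>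
         integral\<^sup>L (ST \<Omega> {\<tau>..\<tau>+1}) (\<lambda>(t,x). (norm (Hphi t x))\<^sup>2) \<le> C) \<and>
     \<comment> \<open>|phi| < 1 a.e.\<close>
     (AE z in ST \<Omega> {0..}. \<bar>phi (fst z) (snd z)\<bar> < 1) \<and>
     \<comment> \<open>d/dt phi = D in L^2(0,oo; H^1_(0)(Omega)')\<close>
     (\<forall>v. H1 \<Omega> v \<longrightarrow> (\<lambda>t. D t v) \<in> borel_measurable (lebesgue_on {0..})) \<and>
     g \<in> borel_measurable (lebesgue_on {0..}) \<and>
     integrable (lebesgue_on {0..}) (\<lambda>t. (g t)\<^sup>2) \<and>
     (AE t in lebesgue_on {0..}.
        (\<forall>v w a b. H1 \<Omega> v \<longrightarrow> H1 \<Omega> w \<longrightarrow> D t (\<lambda>x. a * v x + b * w x) = a * D t v + b * D t w) \<and>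
        (\<forall>v Gv. weak_grad \<Omega> v Gv \<longrightarrow>
           \<bar>D t v\<bar> \<le> g t * sqrt (LINT x|lebesgue_on \<Omega>. (norm (Gv x))\<^sup>2))) \<and>
     (\<forall>v (\<zeta>::real \<Rightarrow> real). H1 \<Omega> v \<longrightarrow> test_fun {0<..} \<zeta> \<longrightarrow>
        - (LINT t|lebesgue_on {0..}. (LINT x|lebesgue_on \<Omega>. phi t x * v x) * deriv \<zeta> t)
        = (LINT t|lebesgue_on {0..}. D t v * \<zeta> t)) \<and>
     \<comment> \<open>mu in L^2_uloc([0,oo); H^1)\<close>
     (\<lambda>(t,x). mu t x) \<in> borel_measurable (ST \<Omega> {0..}) \<and>
     (\<lambda>(t,x). Gmu t x) \<in> borel_measurable (ST \<Omega> {0..}) \<and>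
     (AE t in lebesgue_on {0..}. weak_grad \<Omega> (mu t) (Gmu t)) \<and>
     (\<exists>C. \<forall>\<tau>\<ge>0. integrable (ST \<Omega> {\<tau>..\<tau>+1}) (\<lambda>(t,x). (mu t x)\<^sup>2 + (norm (Gmu t x))\<^sup>2) \<and>
         integral\<^sup>L (ST \<Omega> {\<tau>..\<tau>+1}) (\<lambda>(t,x). (mu t x)\<^sup>2 + (norm (Gmu t x))\<^sup>2) \<le> C) \<and>
     \<comment> \<open>initial data\<close>
     (AE x in lebesgue_on \<Omega>. u 0 x = u0 x) \<and>
     (AE x in lebesgue_on \<Omega>. phi 0 x = phi0 x) \<and>
     \<comment> \<open>momentum equation, weak form\<close>
     (\<forall>T>0. \<forall>W::real \<times> (real^'n) \<Rightarrow> real^'n.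
        test_fun ({0<..<T} \<times> \<Omega>) W \<and> (\<forall>t x. divg (\<lambda>y. W (t, y)) x = 0) \<longrightarrow>
        stint \<Omega> 0 T (\<lambda>\<tau> x.
            - (rho \<rho>1 \<rho>2 (phi \<tau> x) * (u \<tau> x \<bullet> pd (1, 0) W (\<tau>, x)))
            - rho \<rho>1 \<rho>2 (phi \<tau> x) * frob (outer (u \<tau> x) (u \<tau> x)) (symgrad (Wgrad W \<tau> x))
            + \<nu> (phi \<tau> x) * frob (symgrad (Gu \<tau> x)) (symgrad (Wgrad W \<tau> x))
            - (\<Sum>i\<in>UNIV. u \<tau> x $ i *
                 (\<Sum>j\<in>UNIV. (- (\<rho>1 - \<rho>2) / 2 * m (phi \<tau> x) * Gmu \<tau> x $ j) * Wgrad W \<tau> x $ i $ j)))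
        = - stint \<Omega> 0 T (\<lambda>\<tau> x. phi \<tau> x * (Gmu \<tau> x \<bullet> W (\<tau>, x)))) \<and>
     \<comment> \<open>Cahn--Hilliard equation, weak form\<close>
     (AE t in lebesgue_on {0..}. \<forall>v Gv. weak_grad \<Omega> v Gv \<longrightarrow>
        D t v - (LINT x|lebesgue_on \<Omega>. phi t x * (u t x \<bullet> Gv x))
          + (LINT x|lebesgue_on \<Omega>. m (phi t x) * (Gmu t x \<bullet> Gv x)) = 0) \<and>
     \<comment> \<open>mu = - Laplace phi + f'(phi) a.e.\<close>
     (AE t in lebesgue_on {0..}. AE x in lebesgue_on \<Omega>.
        mu t x = - lap (Hphi t x) + deriv F (phi t x) - \<theta>0 * phi t x) \<and>
     \<comment> \<open>homogeneous Neumann condition for the H^2 function phi(t) (Green's formula)\<close>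
     (AE t in lebesgue_on {0..}. \<forall>v Gv. weak_grad \<Omega> v Gv \<longrightarrow>
        (LINT x|lebesgue_on \<Omega>. lap (Hphi t x) * v x) = - (LINT x|lebesgue_on \<Omega>. Gphi t x \<bullet> Gv x)) \<and>
     \<comment> \<open>energy inequalities, for all t and s = 0 and a.a. s in [0,t]\<close>
     (\<forall>t\<ge>0. let
        KE = (\<lambda>s. (1/2) * (LINT x|lebesgue_on \<Omega>. rho \<rho>1 \<rho>2 (phi t x) * (norm (u t x))\<^sup>2)
                 + stint \<Omega> s t (\<lambda>\<tau> x. \<nu> (phi \<tau> x) * frob (symgrad (Gu \<tau> x)) (symgrad (Gu \<tau> x)))
               \<le> (1/2) * (LINT x|lebesgue_on \<Omega>. rho \<rho>1 \<rho>2 (phi s x) * (norm (u s x))\<^sup>2)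
                 - stint \<Omega> s t (\<lambda>\<tau> x. (u \<tau> x \<bullet> Gmu \<tau> x) * phi \<tau> x));
        EE = (\<lambda>s. Eng \<Omega> F \<theta>0 (phi t) (Gphi t)
                 + ereal (stint \<Omega> s t (\<lambda>\<tau> x. m (phi \<tau> x) * (norm (Gmu \<tau> x))\<^sup>2))
               \<le> Eng \<Omega> F \<theta>0 (phi s) (Gphi s)
                 + ereal (stint \<Omega> s t (\<lambda>\<tau> x. (u \<tau> x \<bullet> Gmu \<tau> x) * phi \<tau> x)))
      in (KE 0 \<and> EE 0) \<and> (AE s in lebesgue_on {0..t}. KE s \<and> EE s))"
    apply (insert sol[unfolded global_weak_solution_def])
    apply (elim exE)
    apply (rule that)
    apply assumption
    done
  have uL2: "\<forall>t\<ge>0. L2sigma \<Omega> (u t)"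
    using H by (elim conjE) assumption
  have umeas: "(\<lambda>(t,x). u t x) \<in> borel_measurable (ST \<Omega> {0..})"
    using H by (elim conjE) assumption
  have uint: "integrable (ST \<Omega> {0..}) (\<lambda>(t,x). (norm (u t x))\<^sup>2 + (norm (Gu t x))\<^sup>2)"
    using H by (elim conjE) assumption
  have phigrad: "\<forall>t\<ge>0. weak_grad \<Omega> (phi t) (Gphi t)"
    using H by (elim conjE) assumption
  have phimeas: "(\<lambda>(t,x). phi t x) \<in> borel_measurable (ST \<Omega> {0..})"
    using H by (elim conjE) assumption
  have phibd: "AE z in ST \<Omega> {0..}. \<bar>phi (fst z) (snd z)\<bar> < 1"
    using H by (elim conjE) assumption
  have mumeas: "(\<lambda>(t,x). mu t x) \<in> borel_measurable (ST \<Omega> {0..})"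
    using H by (elim conjE) assumption
  have Gmumeas: "(\<lambda>(t,x). Gmu t x) \<in> borel_measurable (ST \<Omega> {0..})"
    using H by (elim conjE) assumption
  have mubd: "\<exists>C. \<forall>\<tau>\<ge>0. integrable (ST \<Omega> {\<tau>..\<tau>+1}) (\<lambda>(t,x). (mu t x)\<^sup>2 + (norm (Gmu t x))\<^sup>2) \<and>
         integral\<^sup>L (ST \<Omega> {\<tau>..\<tau>+1}) (\<lambda>(t,x). (mu t x)\<^sup>2 + (norm (Gmu t x))\<^sup>2) \<le> C"
    using H by (elim conjE) assumption
  have ini: "AE x in lebesgue_on \<Omega>. phi 0 x = phi0 x"
    using H by (elim conjE) assumption
  have energy: "\<forall>t\<ge>0. let
        KE = (\<lambda>s. (1/2) * (LINT x|lebesgue_on \<Omega>. rho \<rho>1 \<rho>2 (phi t x) * (norm (u t x))\<^sup>2)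
                 + stint \<Omega> s t (\<lambda>\<tau> x. \<nu> (phi \<tau> x) * frob (symgrad (Gu \<tau> x)) (symgrad (Gu \<tau> x)))
               \<le> (1/2) * (LINT x|lebesgue_on \<Omega>. rho \<rho>1 \<rho>2 (phi s x) * (norm (u s x))\<^sup>2)
                 - stint \<Omega> s t (\<lambda>\<tau> x. (u \<tau> x \<bullet> Gmu \<tau> x) * phi \<tau> x));
        EE = (\<lambda>s. Eng \<Omega> F \<theta>0 (phi t) (Gphi t)
                 + ereal (stint \<Omega> s t (\<lambda>\<tau> x. m (phi \<tau> x) * (norm (Gmu \<tau> x))\<^sup>2))
               \<le> Eng \<Omega> F \<theta>0 (phi s) (Gphi s)
                 + ereal (stint \<Omega> s t (\<lambda>\<tau> x. (u \<tau> x \<bullet> Gmu \<tau> x) * phi \<tau> x)))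
      in (KE 0 \<and> EE 0) \<and> (AE s in lebesgue_on {0..t}. KE s \<and> EE s)"
    using H by (elim conjE) assumption

  define LO where "LO = lebesgue_on \<Omega>"
  define P where "P = ST \<Omega> {0..}"
  define U where "U t = (LINT x|lebesgue_on \<Omega>. (norm (u t x))\<^sup>2)" for t
  define K where "K t = (1/2) * (LINT x|lebesgue_on \<Omega>. rho \<rho>1 \<rho>2 (phi t x) * (norm (u t x))\<^sup>2)" for t
  define X where "X s t = stint \<Omega> s t (\<lambda>\<tau> x. (u \<tau> x \<bullet> Gmu \<tau> x) * phi \<tau> x)" for s t
  define V where "V s t = stint \<Omega> s t (\<lambda>\<tau> x. \<nu> (phi \<tau> x) * frob (symgrad (Gu \<tau> x)) (symgrad (Gu \<tau> x)))" for s t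
  define Tu where "Tu s = (\<integral>\<^sup>+ z. ennreal ((norm (u (fst z) (snd z)))\<^sup>2) * indicator {s..} (fst z) \<partial>P)" for s
  define rmin where "rmin = min \<rho>1 \<rho>2"
  define rmax where "rmax = max \<rho>1 \<rho>2"
  have rmin: "0 < rmin" and rmax: "0 < rmax" using rho_pos by (auto simp: rmin_def rmax_def)
  obtain C where C: "\<forall>\<tau>\<ge>0. integrable (ST \<Omega> {\<tau>..\<tau>+1}) (\<lambda>(t,x). (mu t x)\<^sup>2 + (norm (Gmu t x))\<^sup>2) \<and>
         integral\<^sup>L (ST \<Omega> {\<tau>..\<tau>+1}) (\<lambda>(t,x). (mu t x)\<^sup>2 + (norm (Gmu t x))\<^sup>2) \<le> C"
    using mubd by blast
  have Om: "\<Omega> \<in> lmeasurable" using dom by (auto simp: C3_domain_def intro: lmeasurable_open)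
  then have Os: "\<Omega> \<in> sets lebesgue" by (rule fmeasurableD)
  have sfO: "sigma_finite_measure LO"
    using finite_measure_lebesgue_on[OF Om] unfolding LO_def by (simp add: finite_measure_def)
  have PP: "P = lebesgue_on {0..} \<Otimes>\<^sub>M LO" by (simp add: P_def ST_def LO_def)

  have enK: "AE s in lebesgue_on {0..t}. K t + V s t \<le> K s - X s t" if "t \<ge> 0" for t
    using energy[rule_format, OF that] unfolding Let_def K_def V_def X_def
    by (auto elim: eventually_mono)
  have enE: "Eng \<Omega> F \<theta>0 (phi t) (Gphi t) + ereal (stint \<Omega> 0 t (\<lambda>\<tau> x. m (phi \<tau> x) * (norm (Gmu \<tau> x))\<^sup>2))
       \<le> Eng \<Omega> F \<theta>0 (phi 0) (Gphi 0) + ereal (X 0 t)" if "t \<ge> 0" for t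
    using energy[rule_format, OF that] unfolding Let_def X_def
    by auto

  have phi0bd: "AE x in LO. \<bar>phi 0 x\<bar> \<le> 1"
  proof -
    have "AE x in LO. \<bar>phi0 x\<bar> \<le> 1" using phi0(3) unfolding Hk_def LO_def by auto
    then show ?thesis using ini unfolding LO_def[symmetric] by eventually_elim simp
  qed
  have phibd_t: "AE x in LO. \<bar>phi t x\<bar> \<le> 1" if t: "t \<ge> 0" for t
  proof (rule ccontr)
    assume nb: "\<not> (AE x in LO. \<bar>phi t x\<bar> \<le> 1)"
    have "Eng \<Omega> F \<theta>0 (phi t) (Gphi t) = \<infinity>" using nb unfolding Eng_def LO_def by simp
    moreover have "Eng \<Omega> F \<theta>0 (phi 0) (Gphi 0) \<noteq> \<infinity>" using phi0bd unfolding Eng_def LO_def by simp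
    ultimately show False using enE[OF t] by auto
  qed
  have uL2t: "L2 \<Omega> (u t)" if "t \<ge> 0" for t using uL2 that unfolding L2sigma_def by blast
  have um_t: "u t \<in> borel_measurable LO" and ui_t: "integrable LO (\<lambda>x. (norm (u t x))\<^sup>2)" if "t \<ge> 0" for t
    using uL2t[OF that] unfolding L2_def LO_def by auto
  have pm_t: "phi t \<in> borel_measurable LO" if "t \<ge> 0" for t
    using phigrad that unfolding weak_grad_def L2_def LO_def by auto
  have rhoi_t: "integrable LO (\<lambda>x. rho \<rho>1 \<rho>2 (phi t x) * (norm (u t x))\<^sup>2)" if t: "t \<ge> 0" for t
  proof (rule Bochner_Integration.integrable_bound)
    show "integrable LO (\<lambda>x. rmax * (norm (u t x))\<^sup>2)" using ui_t[OF t] by simp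
    have [measurable]: "phi t \<in> borel_measurable LO" "u t \<in> borel_measurable LO" using pm_t[OF t] um_t[OF t] by auto
    show "(\<lambda>x. rho \<rho>1 \<rho>2 (phi t x) * (norm (u t x))\<^sup>2) \<in> borel_measurable LO"
      unfolding rho_def by measurable
    show "AE x in LO. norm (rho \<rho>1 \<rho>2 (phi t x) * (norm (u t x))\<^sup>2) \<le> norm (rmax * (norm (u t x))\<^sup>2)"
      using phibd_t[OF t]
    proof eventually_elim
      case (elim x)
      have "0 \<le> rho \<rho>1 \<rho>2 (phi t x)" "rho \<rho>1 \<rho>2 (phi t x) \<le> rmax"
        using rho_bounds[OF elim rho_pos] rmin unfolding rmin_def rmax_def by auto
      then show ?case using rmax by (auto simp: abs_mult intro!: mult_right_mono)
    qed
  qed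
  have Kl: "rmin / 2 * U t \<le> K t" and Ku: "K t \<le> rmax / 2 * U t" if t: "t \<ge> 0" for t
  proof -
    have "(LINT x|LO. rmin * (norm (u t x))\<^sup>2) \<le> (LINT x|LO. rho \<rho>1 \<rho>2 (phi t x) * (norm (u t x))\<^sup>2)"
      using phibd_t[OF t]
      by (intro integral_mono_AE rhoi_t[OF t]) (auto simp: ui_t[OF t] rmin_def elim!: eventually_mono
          intro!: mult_right_mono rho_bounds rho_pos)
    then show "rmin / 2 * U t \<le> K t" unfolding K_def U_def LO_def by simp
    have "(LINT x|LO. rho \<rho>1 \<rho>2 (phi t x) * (norm (u t x))\<^sup>2) \<le> (LINT x|LO. rmax * (norm (u t x))\<^sup>2)"
      using phibd_t[OF t]
      by (intro integral_mono_AE rhoi_t[OF t]) (auto simp: ui_t[OF t] rmax_def elim!: eventually_mono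
          intro!: mult_right_mono rho_bounds rho_pos)
    then show "K t \<le> rmax / 2 * U t" unfolding K_def U_def LO_def by simp
  qed
  have V0: "0 \<le> V s t" for s t
    unfolding V_def stint_def
  proof (intro integral_nonneg_AE AE_I2)
    fix \<tau> x
    have "0 \<le> frob (symgrad (Gu \<tau> x)) (symgrad (Gu \<tau> x))"
      unfolding frob_def by (intro sum_nonneg) simp
    moreover have "0 \<le> \<nu> (phi \<tau> x)" using nu_bds by (meson less_le_trans less_imp_le)
    ultimately show "0 \<le> \<nu> (phi \<tau> x) * frob (symgrad (Gu \<tau> x)) (symgrad (Gu \<tau> x))" by simp
  qed
  have Uenn: "ennreal (U t) = (\<integral>\<^sup>+ x. ennreal ((norm (u t x))\<^sup>2) \<partial>LO)" if "t \<ge> 0" for t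
    unfolding U_def LO_def[symmetric] using ui_t[OF that]
    by (intro nn_integral_eq_integral[symmetric]) auto
  have U0: "0 \<le> U t" for t unfolding U_def by simp

  have umP[measurable]: "(\<lambda>z. u (fst z) (snd z)) \<in> borel_measurable P"
    using umeas unfolding P_def by (simp add: split_beta')
  have GumP[measurable]: "(\<lambda>z. Gu (fst z) (snd z)) \<in> borel_measurable P"
    using H unfolding P_def by (simp add: split_beta')
  have phimP[measurable]: "(\<lambda>z. phi (fst z) (snd z)) \<in> borel_measurable P"
    using phimeas unfolding P_def by (simp add: split_beta')
  have mumP[measurable]: "(\<lambda>z. mu (fst z) (snd z)) \<in> borel_measurable P"
    using mumeas unfolding P_def by (simp add: split_beta')
  have GmumP[measurable]: "(\<lambda>z. Gmu (fst z) (snd z)) \<in> borel_measurable P"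
    using Gmumeas unfolding P_def by (simp add: split_beta')
  have fstm: "fst \<in> borel_measurable P"
  proof -
    have "(\<lambda>t::real. t) \<in> borel_measurable (lebesgue_on {0..})"
      by (intro measurable_restrict_space1 measurable_completion) simp
    then show ?thesis unfolding PP by (rule measurable_fst'')
  qed
  have Tfin: "(\<integral>\<^sup>+ z. ennreal ((norm (u (fst z) (snd z)))\<^sup>2) \<partial>P) < \<infinity>"
  proof -
    have "(\<integral>\<^sup>+ z. ennreal ((norm (u (fst z) (snd z)))\<^sup>2) \<partial>P)
        \<le> (\<integral>\<^sup>+ z. ennreal (norm ((\<lambda>(t,x). (norm (u t x))\<^sup>2 + (norm (Gu t x))\<^sup>2) z)) \<partial>P)"
      by (intro nn_integral_mono) (auto simp: split_beta')
    also have "\<dots> < \<infinity>" using uint unfolding P_def integrable_iff_bounded by simp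
    finally show ?thesis .
  qed
  have tail: "\<exists>S. \<forall>s\<ge>S. Tu s < \<eta>" if "\<eta> > 0" for \<eta>
    unfolding Tu_def by (rule tail0[OF _ fstm Tfin that]) measurable

  have indm: "(\<lambda>z. indicator {s..t} (fst z) :: ennreal) \<in> borel_measurable P" for s t :: real
    by (rule measurable_compose[OF fstm borel_measurable_indicator]) simp
  have Xbd: "ennreal \<bar>X s t\<bar> \<le> ennreal (a/2) * Tu s + ennreal (1/(2*a)) * ennreal C"
    if s0: "0 \<le> s" and st: "s \<le> t" "t \<le> s + 1" and a: "0 < a" for s t a
  proof -
    define h where "h \<tau> x = (u \<tau> x \<bullet> Gmu \<tau> x) * phi \<tau> x" for \<tau> x
    define Af where "Af z = ennreal ((norm (u (fst z) (snd z)))\<^sup>2)" for z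
    define Bf where "Bf z = ennreal ((mu (fst z) (snd z))\<^sup>2 + (norm (Gmu (fst z) (snd z)))\<^sup>2)" for z
    define c1 where "c1 = ennreal (a/2)"
    define c2 where "c2 = ennreal (1/(2*a))"
    have hm[measurable]: "(\<lambda>z. ennreal \<bar>h (fst z) (snd z)\<bar>) \<in> borel_measurable P" unfolding h_def by measurable
    have Am[measurable]: "Af \<in> borel_measurable P" unfolding Af_def by measurable
    have Bm[measurable]: "Bf \<in> borel_measurable P" unfolding Bf_def by measurable
    note indm[measurable]
    have Iv: "{s..t} \<in> sets lebesgue" by simp
    have "ennreal \<bar>X s t\<bar> \<le> (\<integral>\<^sup>+ \<tau>. ennreal (norm (LINT x|LO. h \<tau> x)) \<partial>lebesgue_on {s..t})"
      unfolding X_def stint_def h_def LO_def using norm_int_le_nn[of "lebesgue_on {s..t}"] by simp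
    also have "\<dots> \<le> (\<integral>\<^sup>+ \<tau>. (\<integral>\<^sup>+ x. ennreal \<bar>h \<tau> x\<bar> \<partial>LO) \<partial>lebesgue_on {s..t})"
      by (intro nn_integral_mono) (use norm_int_le_nn in simp)
    also have "\<dots> = (\<integral>\<^sup>+ \<tau>. (\<integral>\<^sup>+ x. ennreal \<bar>h \<tau> x\<bar> \<partial>LO) * indicator {s..t} \<tau> \<partial>lebesgue_on {0..})"
      using s0 by (intro restrict_L0) auto
    also have "\<dots> = (\<integral>\<^sup>+ z. ennreal \<bar>h (fst z) (snd z)\<bar> * indicator {s..t} (fst z) \<partial>P)"
      using tonelli_ind[OF sfO hm[unfolded PP] Iv] unfolding PP by simp
    also have "\<dots> \<le> (\<integral>\<^sup>+ z. (c1 * Af z + c2 * Bf z) * indicator {s..t} (fst z) \<partial>P)"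
    proof (intro nn_integral_mono_AE)
      show "AE z in P. ennreal \<bar>h (fst z) (snd z)\<bar> * indicator {s..t} (fst z)
               \<le> (c1 * Af z + c2 * Bf z) * indicator {s..t} (fst z)"
        using phibd unfolding P_def[symmetric]
      proof eventually_elim
        case (elim z)
        define uu where "uu = u (fst z) (snd z)"
        define gg where "gg = Gmu (fst z) (snd z)"
        define mm where "mm = mu (fst z) (snd z)"
        have "\<bar>h (fst z) (snd z)\<bar> = \<bar>uu \<bullet> gg\<bar> * \<bar>phi (fst z) (snd z)\<bar>"
          unfolding h_def uu_def gg_def by (simp add: abs_mult)
        also have "\<dots> \<le> \<bar>uu \<bullet> gg\<bar>" using elim by (simp add: mult_left_le)
        also have "\<dots> \<le> norm uu * norm gg" by (rule Cauchy_Schwarz_ineq2)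
        also have "\<dots> \<le> a/2 * (norm uu)\<^sup>2 + 1/(2*a) * (norm gg)\<^sup>2" by (rule amgm[OF a])
        also have "\<dots> \<le> a/2 * (norm uu)\<^sup>2 + 1/(2*a) * (mm\<^sup>2 + (norm gg)\<^sup>2)"
          using a by (intro add_left_mono mult_left_mono) auto
        finally have r: "\<bar>h (fst z) (snd z)\<bar> \<le> a/2 * (norm uu)\<^sup>2 + 1/(2*a) * (mm\<^sup>2 + (norm gg)\<^sup>2)" .
        have e: "c1 * Af z + c2 * Bf z = ennreal (a/2 * (norm uu)\<^sup>2 + 1/(2*a) * (mm\<^sup>2 + (norm gg)\<^sup>2))"
          unfolding c1_def c2_def Af_def Bf_def uu_def gg_def mm_def using a
          by (simp add: ennreal_mult[symmetric] ennreal_plus[symmetric] del: ennreal_plus)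
        show ?case unfolding e using r by (auto simp: indicator_def intro: ennreal_leI)
      qed
    qed
    also have "\<dots> = (\<integral>\<^sup>+ z. c1 * (Af z * indicator {s..t} (fst z)) + c2 * (Bf z * indicator {s..t} (fst z)) \<partial>P)"
      by (simp add: algebra_simps)
    also have "\<dots> = (\<integral>\<^sup>+ z. c1 * (Af z * indicator {s..t} (fst z)) \<partial>P) + (\<integral>\<^sup>+ z. c2 * (Bf z * indicator {s..t} (fst z)) \<partial>P)"
      by (rule nn_integral_add) measurable
    also have "\<dots> = c1 * (\<integral>\<^sup>+ z. Af z * indicator {s..t} (fst z) \<partial>P) + c2 * (\<integral>\<^sup>+ z. Bf z * indicator {s..t} (fst z) \<partial>P)"
      by (simp add: nn_integral_cmult)
    also have "\<dots> \<le> c1 * Tu s + c2 * ennreal C"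
    proof (intro add_mono mult_left_mono)
      show "(\<integral>\<^sup>+ z. Af z * indicator {s..t} (fst z) \<partial>P) \<le> Tu s"
        unfolding Tu_def Af_def by (intro nn_integral_mono) (auto simp: indicator_def)
      define B' where "B' \<tau> = (\<integral>\<^sup>+ x. Bf (\<tau>, x) \<partial>LO)" for \<tau>
      have "(\<integral>\<^sup>+ z. Bf z * indicator {s..t} (fst z) \<partial>P) = (\<integral>\<^sup>+ \<tau>. B' \<tau> * indicator {s..t} \<tau> \<partial>lebesgue_on {0..})"
        using tonelli_ind[OF sfO Bm[unfolded PP] Iv] unfolding PP B'_def by simp
      also have "\<dots> = integral\<^sup>N (lebesgue_on {s..t}) B'"
        using s0 by (intro restrict_L0[symmetric]) auto
      also have "\<dots> = (\<integral>\<^sup>+ \<tau>. B' \<tau> * indicator {s..t} \<tau> \<partial>lebesgue_on {s..s+1})"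
        using st by (intro restrict_L0) auto
      also have "\<dots> \<le> integral\<^sup>N (lebesgue_on {s..s+1}) B'"
        by (intro nn_integral_mono) (auto simp: indicator_def)
      also have "\<dots> = integral\<^sup>N (ST \<Omega> {s..s+1}) Bf"
      proof -
        have "integrable (ST \<Omega> {s..s+1}) (\<lambda>(t,x). (mu t x)\<^sup>2 + (norm (Gmu t x))\<^sup>2)" using C s0 by blast
        then have "(\<lambda>(t,x). (mu t x)\<^sup>2 + (norm (Gmu t x))\<^sup>2) \<in> borel_measurable (ST \<Omega> {s..s+1})" by auto
        then have "(\<lambda>z. (mu (fst z) (snd z))\<^sup>2 + (norm (Gmu (fst z) (snd z)))\<^sup>2) \<in> borel_measurable (lebesgue_on {s..s+1} \<Otimes>\<^sub>M LO)"
          unfolding ST_def LO_def by (simp add: split_beta')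
        then have "Bf \<in> borel_measurable (lebesgue_on {s..s+1} \<Otimes>\<^sub>M LO)"
          unfolding Bf_def by (rule measurable_compose[OF _ measurable_ennreal])
        from sigma_finite_measure.nn_integral_fst[OF sfO this] show ?thesis
          unfolding B'_def ST_def LO_def by simp
      qed
      also have "\<dots> = ennreal (integral\<^sup>L (ST \<Omega> {s..s+1}) (\<lambda>(t,x). (mu t x)\<^sup>2 + (norm (Gmu t x))\<^sup>2))"
      proof -
        have "integrable (ST \<Omega> {s..s+1}) (\<lambda>(t,x). (mu t x)\<^sup>2 + (norm (Gmu t x))\<^sup>2)" using C s0 by blast
        from nn_integral_eq_integral[OF this] show ?thesis unfolding Bf_def by (simp add: split_beta')
      qed
      also have "\<dots> \<le> ennreal C" using C s0 by (intro ennreal_leI) blast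
      finally show "(\<integral>\<^sup>+ z. Bf z * indicator {s..t} (fst z) \<partial>P) \<le> ennreal C" .
    qed simp_all
    finally show ?thesis unfolding c1_def c2_def .
  qed

  have sel: "\<exists>s. t - 1 \<le> s \<and> s \<le> t \<and> K t + V s t \<le> K s - X s t \<and> U s < \<delta>"
    if t1: "1 \<le> t" and d: "0 < \<delta>" and Tt: "Tu (t-1) < ennreal \<delta>" for t \<delta>
  proof (rule ccontr)
    assume nx: "\<not> ?thesis"
    have t0: "0 \<le> t" using t1 by simp
    have Iv: "{t-1..t} \<in> sets lebesgue" by simp
    have AEb: "AE s in lebesgue_on {0..t}. ennreal \<delta> * indicator {t-1..t} s \<le> ennreal (U s) * indicator {t-1..t} s"
      using enK[OF t0]
    proof eventually_elim
      case (elim s)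
      show ?case
      proof (cases "s \<in> {t-1..t}")
        case True
        then have "\<delta> \<le> U s" using nx elim by auto
        then show ?thesis using True by (auto intro: ennreal_leI)
      qed simp
    qed
    have meas1: "emeasure (lebesgue_on {0..t}) {t-1..t} = 1"
      using t1 by (subst emeasure_restrict_space) auto
    have "ennreal \<delta> = (\<integral>\<^sup>+ s. ennreal \<delta> * indicator {t-1..t} s \<partial>lebesgue_on {0..t})"
      using t1 by (subst nn_integral_cmult_indicator) (auto simp: meas1 sets_restrict_space_iff)
    also have "\<dots> \<le> (\<integral>\<^sup>+ s. ennreal (U s) * indicator {t-1..t} s \<partial>lebesgue_on {0..t})"
      using AEb by (rule nn_integral_mono_AE)
    also have "\<dots> = (\<integral>\<^sup>+ s. ennreal (U s) * indicator {t-1..t} s * indicator {0..t} s \<partial>lebesgue_on {0..})"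
      using t1 by (intro restrict_L0) auto
    also have "\<dots> = (\<integral>\<^sup>+ s. (\<integral>\<^sup>+ x. ennreal ((norm (u s x))\<^sup>2) \<partial>LO) * indicator {t-1..t} s \<partial>lebesgue_on {0..})"
    proof (intro nn_integral_cong)
      fix s
      show "ennreal (U s) * indicator {t-1..t} s * indicator {0..t} s = (\<integral>\<^sup>+ x. ennreal ((norm (u s x))\<^sup>2) \<partial>LO) * indicator {t-1..t} s"
      proof (cases "s \<in> {t-1..t}")
        case True
        then have "0 \<le> s" using t1 by auto
        then show ?thesis using True Uenn[of s] by auto
      qed simp
    qed
    also have "\<dots> = (\<integral>\<^sup>+ z. ennreal ((norm (u (fst z) (snd z)))\<^sup>2) * indicator {t-1..t} (fst z) \<partial>P)"
    proof -
      have m: "(\<lambda>z. ennreal ((norm (u (fst z) (snd z)))\<^sup>2)) \<in> borel_measurable (lebesgue_on {0..} \<Otimes>\<^sub>M LO)"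
        unfolding PP[symmetric] by measurable
      show ?thesis using tonelli_ind[OF sfO m Iv] unfolding PP by simp
    qed
    also have "\<dots> \<le> Tu (t-1)"
      unfolding Tu_def by (intro nn_integral_mono) (auto simp: indicator_def)
    finally show False using Tt by simp
  qed

  have small: "\<exists>S. \<forall>t\<ge>S. U t < e\<^sup>2" if e: "0 < e" for e
  proof -
    define E where "E = rmin / 2 * e\<^sup>2"
    have E: "0 < E" using rmin e by (simp add: E_def)
    define C' where "C' = \<bar>C\<bar> + 1"
    have C': "0 < C'" "C \<le> C'" by (auto simp: C'_def)
    define a where "a = 3 * C' / E"
    have a: "0 < a" using C' E by (simp add: a_def)
    define \<delta> where "\<delta> = E / (3 * (rmax + a))"
    have d: "0 < \<delta>" using E rmax a by (simp add: \<delta>_def)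
    obtain S0 where S0: "\<forall>s\<ge>S0. Tu s < ennreal \<delta>" using tail[of "ennreal \<delta>"] d by auto
    show ?thesis
    proof (intro exI[of _ "max 1 (S0 + 1)"] allI impI)
      fix t assume tS: "max 1 (S0 + 1) \<le> t"
      then have t1: "1 \<le> t" and tS0: "S0 \<le> t - 1" by auto
      have "Tu (t-1) < ennreal \<delta>" using S0 tS0 by auto
      from sel[OF t1 d this] obtain s where s: "t - 1 \<le> s" "s \<le> t" "K t + V s t \<le> K s - X s t" "U s < \<delta>"
        by blast
      have s0: "0 \<le> s" using s t1 by simp
      have Ts: "Tu s \<le> ennreal \<delta>" using S0 s tS0 by (meson less_imp_le order_trans)
      have "ennreal \<bar>X s t\<bar> \<le> ennreal (a/2) * Tu s + ennreal (1/(2*a)) * ennreal C"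
        using Xbd[OF s0 s(2) _ a] s(1) by simp
      also have "\<dots> \<le> ennreal (a/2) * ennreal \<delta> + ennreal (1/(2*a)) * ennreal C'"
        using Ts C' by (intro add_mono mult_left_mono ennreal_leI) auto
      also have "\<dots> = ennreal (a/2 * \<delta> + 1/(2*a) * C')"
        using a d C' by (simp add: ennreal_mult[symmetric] ennreal_plus[symmetric] del: ennreal_plus)
      finally have Xb: "\<bar>X s t\<bar> \<le> a/2 * \<delta> + 1/(2*a) * C'"
        using a d C' by (subst (asm) ennreal_le_iff) auto
      have "rmin / 2 * U t \<le> K t" using Kl t1 by simp
      also have "\<dots> \<le> K s - X s t" using s(3) V0[of s t] by simp
      also have "\<dots> \<le> rmax / 2 * U s + \<bar>X s t\<bar>" using Ku[OF s0] by simp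
      also have "\<dots> \<le> rmax / 2 * \<delta> + (a/2 * \<delta> + 1/(2*a) * C')"
        using s(4) rmax Xb by (intro add_mono mult_left_mono) auto
      also have "\<dots> = E / 3"
      proof -
        have "rmax + a > 0" using rmax a by simp
        then have 1: "(rmax + a) / 2 * \<delta> = E / 6" unfolding \<delta>_def by (simp add: field_simps)
        have 2: "1/(2*a) * C' = E / 6" using E C' unfolding a_def by (simp add: field_simps)
        have "rmax / 2 * \<delta> + (a/2 * \<delta> + 1/(2*a) * C') = (rmax + a) / 2 * \<delta> + 1/(2*a) * C'"
          by (simp add: algebra_simps)
        also have "\<dots> = E / 6 + E / 6" by (simp only: 1 2)
        also have "\<dots> = E / 3" by simp
        finally show ?thesis .
      qed
      also have "\<dots> < E" using E by simp
      finally have "rmin / 2 * U t < rmin / 2 * e\<^sup>2" unfolding E_def .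
      then show "U t < e\<^sup>2" using rmin by simp
    qed
  qed
  have eq: "(\<lambda>t. sqrt (LINT x|lebesgue_on \<Omega>. (norm (u t x))\<^sup>2)) = (\<lambda>t. sqrt (U t))"
    by (simp add: U_def)
  show ?thesis unfolding eq
  proof (rule tendstoI)
    fix e :: real assume e: "0 < e"
    obtain S where S: "\<forall>t\<ge>S. U t < e\<^sup>2" using small[OF e] by blast
    show "\<forall>\<^sub>F t in at_top. dist (sqrt (U t)) 0 < e"
      unfolding eventually_at_top_linorder
    proof (intro exI allI impI)
      fix t assume "S \<le> t"
      then have "U t < e\<^sup>2" using S by auto
      then have "sqrt (U t) < sqrt (e\<^sup>2)" by (rule real_sqrt_less_mono)
      then show "dist (sqrt (U t)) 0 < e" using e U0[of t] by simp
    qed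
  qed
qed

end
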